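(* Let $n\geq 5$, let $B_n$ be the braid group on $n$ strands, and let $G$ be a finite group. If $f\colon B_n\rightarrow G$ is a homomorphism that is not cyclic, then \[ |G| \geq 2^{\lfloor n/2\rfloor-1}\left(\lfloor n/2\rfloor\right)!. \]
   Context: The abelianization of $B_n$ is infinite cyclic, $B_n/B_n'\cong\mathbb{Z}$, where $B_n'$ is the commutator subgroup. A homomorphism $B_n\rightarrow G$ is called cyclic if it factors through the abelianization map $B_n\rightarrow \mathbb{Z}$ (equivalently, if its kernel contains $B_n'$). *)

theory Defs
  imports "HOL-Algebra.Algebra"
begin

text \<open>Braid group B_n via its Artin presentation. A letter (i, True) stands for
  the generator sigma_i and (i, False) for its inverse, 1 \<le> i \<le> n-1.\<close>

type_synonym braid_word = "(nat \<times> bool) list"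

definition braid_letters :: "nat \<Rightarrow> (nat \<times> bool) set" where
  "braid_letters n = {1..<n} \<times> UNIV"

definition braid_words :: "nat \<Rightarrow> braid_word set" where
  "braid_words n = {w. set w \<subseteq> braid_letters n}"

inductive_set braid_cong :: "nat \<Rightarrow> (braid_word \<times> braid_word) set" for n where
  refl: "w \<in> braid_words n \<Longrightarrow> (w, w) \<in> braid_cong n"
| sym: "(x, y) \<in> braid_cong n \<Longrightarrow> (y, x) \<in> braid_cong n"
| trans: "(x, y) \<in> braid_cong n \<Longrightarrow> (y, z) \<in> braid_cong n \<Longrightarrow> (x, z) \<in> braid_cong n"
| ctxt: "(x, y) \<in> braid_cong n \<Longrightarrow> u \<in> braid_words n \<Longrightarrow> v \<in> braid_words n
         \<Longrightarrow> (u @ x @ v, u @ y @ v) \<in> braid_cong n"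
| cancel: "i \<in> {1..<n} \<Longrightarrow> ([(i, b), (i, \<not> b)], []) \<in> braid_cong n"
| far_comm: "i \<in> {1..<n} \<Longrightarrow> j \<in> {1..<n} \<Longrightarrow> i + 2 \<le> j
         \<Longrightarrow> ([(i, True), (j, True)], [(j, True), (i, True)]) \<in> braid_cong n"
| braid: "i \<in> {1..<n} \<Longrightarrow> Suc i \<in> {1..<n}
         \<Longrightarrow> ([(i, True), (Suc i, True), (i, True)],
              [(Suc i, True), (i, True), (Suc i, True)]) \<in> braid_cong n"

definition braid_group :: "nat \<Rightarrow> braid_word set monoid" where
  "braid_group n = \<lparr> carrier = braid_words n // braid_cong n,
     monoid.mult = (\<lambda>A B. \<Union>a\<in>A. \<Union>b\<in>B. braid_cong n `` {a @ b}),
     monoid.one = braid_cong n `` {[]} \<rparr>"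

text \<open>A homomorphism out of B_n is cyclic if it factors through the abelianization,
  i.e. its kernel contains the commutator subgroup.\<close>
definition cyclic_hom :: "'a monoid \<Rightarrow> ('b, 'c) monoid_scheme \<Rightarrow> ('a \<Rightarrow> 'b) \<Rightarrow> bool" where
  "cyclic_hom B G f \<longleftrightarrow> derived B (carrier B) \<subseteq> kernel B G f"

end

theory Submission
  imports Defs
begin

lemma cong_words: "(x, y) \<in> braid_cong n \<Longrightarrow> x \<in> braid_words n \<and> y \<in> braid_words n"
  by (induction rule: braid_cong.induct) (auto simp: braid_words_def braid_letters_def)

lemma words_append[simp]: "a @ b \<in> braid_words n \<longleftrightarrow> a \<in> braid_words n \<and> b \<in> braid_words n"
  by (auto simp: braid_words_def)

lemma words_Nil[simp]: "[] \<in> braid_words n"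
  by (auto simp: braid_words_def)

lemma words_Cons[simp]: "x # b \<in> braid_words n \<longleftrightarrow> x \<in> braid_letters n \<and> b \<in> braid_words n"
  by (auto simp: braid_words_def)

lemma equiv_cong: "equiv (braid_words n) (braid_cong n)"
  unfolding equiv_def refl_on_def sym_def trans_def
proof (intro conjI allI impI ballI subsetI)
  fix p assume "p \<in> braid_cong n" then show "p \<in> braid_words n \<times> braid_words n"
    using cong_words by (cases p) auto
qed (auto intro: braid_cong.refl braid_cong.sym braid_cong.trans)

lemma cong_app: "(a, a') \<in> braid_cong n \<Longrightarrow> (b, b') \<in> braid_cong n \<Longrightarrow> (a @ b, a' @ b') \<in> braid_cong n"
proof -
  assume A: "(a, a') \<in> braid_cong n" and B: "(b, b') \<in> braid_cong n"
  have 1: "([] @ a @ b, [] @ a' @ b) \<in> braid_cong n"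
    by (rule braid_cong.ctxt[OF A]) (use cong_words[OF B] in auto)
  have 2: "(a' @ b @ [], a' @ b' @ []) \<in> braid_cong n"
    by (rule braid_cong.ctxt[OF B]) (use cong_words[OF A] in auto)
  show ?thesis using braid_cong.trans[OF 1[simplified] 2[simplified]] .
qed

lemma class_mult:
  assumes "a \<in> braid_words n" "b \<in> braid_words n"
  shows "braid_cong n `` {a} \<otimes>\<^bsub>braid_group n\<^esub> braid_cong n `` {b} = braid_cong n `` {a @ b}"
proof -
  have "(\<Union>x\<in>braid_cong n `` {a}. \<Union>y\<in>braid_cong n `` {b}. braid_cong n `` {x @ y}) = braid_cong n `` {a @ b}"
  proof (intro equalityI subsetI)
    fix z assume "z \<in> (\<Union>x\<in>braid_cong n `` {a}. \<Union>y\<in>braid_cong n `` {b}. braid_cong n `` {x @ y})"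
    then obtain x y where "(a, x) \<in> braid_cong n" "(b, y) \<in> braid_cong n" "(x @ y, z) \<in> braid_cong n" by auto
    then show "z \<in> braid_cong n `` {a @ b}" using cong_app braid_cong.trans by blast
  next
    fix z assume "z \<in> braid_cong n `` {a @ b}"
    moreover have "(a, a) \<in> braid_cong n" "(b, b) \<in> braid_cong n" using assms braid_cong.refl by auto
    ultimately show "z \<in> (\<Union>x\<in>braid_cong n `` {a}. \<Union>y\<in>braid_cong n `` {b}. braid_cong n `` {x @ y})" by blast
  qed
  then show ?thesis by (simp add: braid_group_def)
qed

lemma carrier_braid: "carrier (braid_group n) = braid_words n // braid_cong n"
  by (simp add: braid_group_def)

lemma one_braid: "\<one>\<^bsub>braid_group n\<^esub> = braid_cong n `` {[]}"
  by (simp add: braid_group_def)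

definition winv :: "braid_word \<Rightarrow> braid_word" where
  "winv w = rev (map (\<lambda>(i, b). (i, \<not> b)) w)"

lemma winv_words: "w \<in> braid_words n \<Longrightarrow> winv w \<in> braid_words n"
  by (auto simp: winv_def braid_words_def braid_letters_def)

lemma winv_cancel: "w \<in> braid_words n \<Longrightarrow> (winv w @ w, []) \<in> braid_cong n"
proof (induction w)
  case Nil then show ?case by (simp add: winv_def braid_cong.refl)
next
  case (Cons x w)
  obtain i b where x: "x = (i, b)" by force
  have w: "w \<in> braid_words n" and i: "i \<in> {1..<n}" using Cons.prems x by (auto simp: braid_letters_def)
  have c: "([(i, \<not> b), (i, \<not> \<not> b)], []) \<in> braid_cong n" using braid_cong.cancel[OF i] by blast
  have "(winv w @ [(i, \<not> b), (i, b)] @ w, winv w @ [] @ w) \<in> braid_cong n"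
    using braid_cong.ctxt[OF c winv_words[OF w] w] by simp
  moreover have "winv (x # w) @ x # w = winv w @ [(i, \<not> b), (i, b)] @ w" by (simp add: winv_def x)
  ultimately show ?case using Cons.IH[OF w] braid_cong.trans by fastforce
qed

lemma group_braid: "group (braid_group n)"
proof (rule groupI)
  fix x y assume "x \<in> carrier (braid_group n)" "y \<in> carrier (braid_group n)"
  then obtain a b where "a \<in> braid_words n" "b \<in> braid_words n" "x = braid_cong n `` {a}" "y = braid_cong n `` {b}"
    by (auto simp: carrier_braid quotient_def)
  then show "x \<otimes>\<^bsub>braid_group n\<^esub> y \<in> carrier (braid_group n)"
    by (simp add: class_mult carrier_braid quotientI)
next
  show "\<one>\<^bsub>braid_group n\<^esub> \<in> carrier (braid_group n)" by (simp add: one_braid carrier_braid quotientI)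
next
  fix x y z assume "x \<in> carrier (braid_group n)" "y \<in> carrier (braid_group n)" "z \<in> carrier (braid_group n)"
  then obtain a b c where "a \<in> braid_words n" "b \<in> braid_words n" "c \<in> braid_words n" "x = braid_cong n `` {a}" "y = braid_cong n `` {b}" "z = braid_cong n `` {c}"
    by (auto simp: carrier_braid quotient_def)
  then show "x \<otimes>\<^bsub>braid_group n\<^esub> y \<otimes>\<^bsub>braid_group n\<^esub> z = x \<otimes>\<^bsub>braid_group n\<^esub> (y \<otimes>\<^bsub>braid_group n\<^esub> z)"
    by (simp add: class_mult)
next
  fix x assume "x \<in> carrier (braid_group n)"
  then obtain a where "a \<in> braid_words n" "x = braid_cong n `` {a}"
    by (auto simp: carrier_braid quotient_def)
  then show "\<one>\<^bsub>braid_group n\<^esub> \<otimes>\<^bsub>braid_group n\<^esub> x = x"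
    by (metis append.left_neutral class_mult one_braid words_Nil)
next
  fix x assume "x \<in> carrier (braid_group n)"
  then obtain a where a: "a \<in> braid_words n" "x = braid_cong n `` {a}"
    by (auto simp: carrier_braid quotient_def)
  have "braid_cong n `` {winv a} \<in> carrier (braid_group n)"
    using a winv_words by (simp add: carrier_braid quotientI)
  moreover have "braid_cong n `` {winv a} \<otimes>\<^bsub>braid_group n\<^esub> x = \<one>\<^bsub>braid_group n\<^esub>"
    using a winv_words[OF a(1)] winv_cancel[OF a(1)] equiv_class_eq[OF equiv_cong]
    by (simp add: class_mult one_braid)
  ultimately show "\<exists>y\<in>carrier (braid_group n). y \<otimes>\<^bsub>braid_group n\<^esub> x = \<one>\<^bsub>braid_group n\<^esub>" by blast
qed

lemma group_braid_eq: "group G \<Longrightarrow> a \<in> carrier G \<Longrightarrow> b \<in> carrier G \<Longrightarrow> a \<otimes>\<^bsub>G\<^esub> b = b \<otimes>\<^bsub>G\<^esub> a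
  \<Longrightarrow> a \<otimes>\<^bsub>G\<^esub> b \<otimes>\<^bsub>G\<^esub> a = b \<otimes>\<^bsub>G\<^esub> a \<otimes>\<^bsub>G\<^esub> b \<Longrightarrow> a = b"
proof -
  assume G: "group G" and a: "a \<in> carrier G" and b: "b \<in> carrier G" and c: "a \<otimes>\<^bsub>G\<^esub> b = b \<otimes>\<^bsub>G\<^esub> a"
    and r: "a \<otimes>\<^bsub>G\<^esub> b \<otimes>\<^bsub>G\<^esub> a = b \<otimes>\<^bsub>G\<^esub> a \<otimes>\<^bsub>G\<^esub> b"
  interpret group G by fact
  have "a \<otimes>\<^bsub>G\<^esub> (a \<otimes>\<^bsub>G\<^esub> b) = a \<otimes>\<^bsub>G\<^esub> (b \<otimes>\<^bsub>G\<^esub> b)"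
    using r c a b by (metis m_assoc)
  then have "a \<otimes>\<^bsub>G\<^esub> b = b \<otimes>\<^bsub>G\<^esub> b" using a b by simp
  then show "a = b" using a b by simp
qed

locale bsetup =
  fixes n :: nat and G :: "('g, 'c) monoid_scheme" and f :: "braid_word set \<Rightarrow> 'g"
  assumes G: "group G" and hom: "f \<in> hom (braid_group n) G"
begin

abbreviation "B \<equiv> braid_group n"
abbreviation "cls w \<equiv> braid_cong n `` {w}"
definition "x i = f (cls [(i, True)])"

lemma gh: "group_hom B G f"
  using G hom group_braid by (simp add: group_hom_def group_hom_axioms_def)

lemma cls_carrier: "w \<in> braid_words n \<Longrightarrow> cls w \<in> carrier B"
  by (simp add: carrier_braid quotientI)

lemma f_app: "a \<in> braid_words n \<Longrightarrow> b \<in> braid_words n \<Longrightarrow> f (cls (a @ b)) = f (cls a) \<otimes>\<^bsub>G\<^esub> f (cls b)"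
proof -
  assume a: "a \<in> braid_words n" "b \<in> braid_words n"
  have "f (cls a \<otimes>\<^bsub>B\<^esub> cls b) = f (cls a) \<otimes>\<^bsub>G\<^esub> f (cls b)"
    by (rule hom_mult[OF hom]) (use a cls_carrier in auto)
  then show ?thesis using class_mult[OF a] by simp
qed

lemma f_carrier: "w \<in> braid_words n \<Longrightarrow> f (cls w) \<in> carrier G"
  using cls_carrier hom by (simp add: hom_in_carrier)

lemma x_carrier: "1 \<le> i \<Longrightarrow> i < n \<Longrightarrow> x i \<in> carrier G"
  unfolding x_def by (rule f_carrier) (simp add: braid_letters_def)

lemma f_three: "i \<in> {1..<n} \<Longrightarrow> j \<in> {1..<n} \<Longrightarrow> l \<in> {1..<n} \<Longrightarrow>
   f (cls [(i,True),(j,True),(l,True)]) = x i \<otimes>\<^bsub>G\<^esub> x j \<otimes>\<^bsub>G\<^esub> x l"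
proof -
  assume "i \<in> {1..<n}" "j \<in> {1..<n}" "l \<in> {1..<n}"
  then show ?thesis
    using f_app[of "[(i,True)]" "[(j,True)]"] f_app[of "[(i,True),(j,True)]" "[(l,True)]"]
    by (simp add: braid_letters_def x_def)
qed

lemma f_two: "i \<in> {1..<n} \<Longrightarrow> j \<in> {1..<n} \<Longrightarrow>
   f (cls [(i,True),(j,True)]) = x i \<otimes>\<^bsub>G\<^esub> x j"
  using f_app[of "[(i,True)]" "[(j,True)]"] by (simp add: braid_letters_def x_def)

lemma x_braid: "1 \<le> i \<Longrightarrow> i + 1 < n \<Longrightarrow>
  x i \<otimes>\<^bsub>G\<^esub> x (i+1) \<otimes>\<^bsub>G\<^esub> x i = x (i+1) \<otimes>\<^bsub>G\<^esub> x i \<otimes>\<^bsub>G\<^esub> x (i+1)"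
proof -
  assume "1 \<le> i" "i + 1 < n"
  then have r: "([(i, True), (Suc i, True), (i, True)], [(Suc i, True), (i, True), (Suc i, True)]) \<in> braid_cong n"
    by (intro braid_cong.braid) auto
  have "cls [(i, True), (Suc i, True), (i, True)] = cls [(Suc i, True), (i, True), (Suc i, True)]"
    using equiv_class_eq[OF equiv_cong r] .
  moreover have "i \<in> {1..<n}" "Suc i \<in> {1..<n}" using \<open>1 \<le> i\<close> \<open>i + 1 < n\<close> by auto
  ultimately show ?thesis using f_three[of i "Suc i" i] f_three[of "Suc i" i "Suc i"] by simp
qed

lemma x_comm: "1 \<le> i \<Longrightarrow> i + 2 \<le> j \<Longrightarrow> j < n \<Longrightarrow> x i \<otimes>\<^bsub>G\<^esub> x j = x j \<otimes>\<^bsub>G\<^esub> x i"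
proof -
  assume a: "1 \<le> i" "i + 2 \<le> j" "j < n"
  then have r: "([(i, True), (j, True)], [(j, True), (i, True)]) \<in> braid_cong n"
    by (intro braid_cong.far_comm) auto
  have "cls [(i, True), (j, True)] = cls [(j, True), (i, True)]"
    using equiv_class_eq[OF equiv_cong r] .
  moreover have "i \<in> {1..<n}" "j \<in> {1..<n}" using a by auto
  ultimately show ?thesis using f_two[of i j] f_two[of j i] by simp
qed

lemma f_inv_letter: "1 \<le> i \<Longrightarrow> i < n \<Longrightarrow> f (cls [(i, False)]) = inv\<^bsub>G\<^esub> x i"
proof -
  assume a: "1 \<le> i" "i < n"
  interpret group G by (rule G)
  have r: "([(i, True), (i, \<not> True)], []) \<in> braid_cong n" using a by (intro braid_cong.cancel) auto
  have "cls [(i, True), (i, False)] = \<one>\<^bsub>B\<^esub>"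
    using equiv_class_eq[OF equiv_cong r] by (simp add: one_braid)
  then have "x i \<otimes>\<^bsub>G\<^esub> f (cls [(i, False)]) = \<one>\<^bsub>G\<^esub>"
    using f_app[of "[(i,True)]" "[(i,False)]"] a group_hom.hom_one[OF gh]
    by (simp add: braid_letters_def x_def)
  moreover have "f (cls [(i, False)]) \<in> carrier G" using a by (intro f_carrier) (simp add: braid_letters_def)
  ultimately show ?thesis using x_carrier[OF a] by (metis inv_comm inv_equality)
qed

lemma all_equal_cyclic:
  assumes c: "c \<in> carrier G" and eq: "\<And>i. 1 \<le> i \<Longrightarrow> i < n \<Longrightarrow> x i = c"
  shows "cyclic_hom B G f"
proof -
  interpret group G by (rule G)
  have commw: "f (cls w) \<otimes>\<^bsub>G\<^esub> y = y \<otimes>\<^bsub>G\<^esub> f (cls w)"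
    if "w \<in> braid_words n" "y \<in> carrier G" "y \<otimes>\<^bsub>G\<^esub> c = c \<otimes>\<^bsub>G\<^esub> y" for w y
    using that(1)
  proof (induction w)
    case Nil
    then show ?case using group_hom.hom_one[OF gh] that(2) by (simp add: one_braid)
  next
    case (Cons l w)
    obtain i b where l: "l = (i, b)" by force
    have w: "w \<in> braid_words n" and i: "1 \<le> i" "i < n" using Cons.prems l by (auto simp: braid_letters_def)
    have fl: "f (cls [l]) = (if b then c else inv\<^bsub>G\<^esub> c)"
      using f_inv_letter[OF i] eq[OF i] by (cases b) (auto simp: l x_def)
    have yi: "y \<otimes>\<^bsub>G\<^esub> inv\<^bsub>G\<^esub> c = inv\<^bsub>G\<^esub> c \<otimes>\<^bsub>G\<^esub> y"
    proof -
      have "inv\<^bsub>G\<^esub> c \<otimes>\<^bsub>G\<^esub> y = inv\<^bsub>G\<^esub> c \<otimes>\<^bsub>G\<^esub> (y \<otimes>\<^bsub>G\<^esub> c) \<otimes>\<^bsub>G\<^esub> inv\<^bsub>G\<^esub> c"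
        using that(2) c by (simp add: m_assoc)
      also have "\<dots> = inv\<^bsub>G\<^esub> c \<otimes>\<^bsub>G\<^esub> (c \<otimes>\<^bsub>G\<^esub> y) \<otimes>\<^bsub>G\<^esub> inv\<^bsub>G\<^esub> c"
        using that(3) by simp
      also have "\<dots> = y \<otimes>\<^bsub>G\<^esub> inv\<^bsub>G\<^esub> c"
        using that(2) c by (simp add: m_assoc[symmetric])
      finally show ?thesis by simp
    qed
    have lc: "f (cls [l]) \<otimes>\<^bsub>G\<^esub> y = y \<otimes>\<^bsub>G\<^esub> f (cls [l])"
      using fl yi that(3) by auto
    have fc: "f (cls [l]) \<in> carrier G" using Cons.prems by (intro f_carrier) (simp add: l)
    have "f (cls (l # w)) = f (cls [l]) \<otimes>\<^bsub>G\<^esub> f (cls w)"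
      using f_app[of "[l]" w] Cons.prems by simp
    then show ?case using Cons.IH[OF w] lc fc f_carrier[OF w] that(2)
      by (metis m_assoc)
  qed
  have commall: "f a \<otimes>\<^bsub>G\<^esub> f b = f b \<otimes>\<^bsub>G\<^esub> f a" if ab0: "a \<in> carrier B" "b \<in> carrier B" for a b
  proof -
    obtain wa wb where w: "wa \<in> braid_words n" "wb \<in> braid_words n" "a = cls wa" "b = cls wb"
      using ab0 by (auto simp: carrier_braid quotient_def)
    have "f (cls wb) \<otimes>\<^bsub>G\<^esub> c = c \<otimes>\<^bsub>G\<^esub> f (cls wb)"
      using commw[OF w(2) c] c by simp
    then show ?thesis using commw[OF w(1) f_carrier[OF w(2)]] w by simp
  qed
  interpret B: group B by (rule group_braid)
  have "derived_set B (carrier B) \<subseteq> kernel B G f"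
  proof
    fix z assume "z \<in> derived_set B (carrier B)"
    then obtain a b where ab: "a \<in> carrier B" "b \<in> carrier B"
      "z = a \<otimes>\<^bsub>B\<^esub> b \<otimes>\<^bsub>B\<^esub> inv\<^bsub>B\<^esub> a \<otimes>\<^bsub>B\<^esub> inv\<^bsub>B\<^esub> b" by blast
    have fa: "f a \<in> carrier G" "f b \<in> carrier G" using ab hom by (auto simp: hom_in_carrier)
    have "f z = f a \<otimes>\<^bsub>G\<^esub> f b \<otimes>\<^bsub>G\<^esub> inv\<^bsub>G\<^esub> f a \<otimes>\<^bsub>G\<^esub> inv\<^bsub>G\<^esub> f b"
      using ab group_hom.hom_mult[OF gh] group_hom.hom_inv[OF gh] by simp
    also have "\<dots> = f b \<otimes>\<^bsub>G\<^esub> f a \<otimes>\<^bsub>G\<^esub> inv\<^bsub>G\<^esub> f a \<otimes>\<^bsub>G\<^esub> inv\<^bsub>G\<^esub> f b"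
      using commall[OF ab(1,2)] by simp
    also have "\<dots> = \<one>\<^bsub>G\<^esub>" using fa by (simp add: m_assoc)
    finally show "z \<in> kernel B G f" using ab by (simp add: kernel_def)
  qed
  then show ?thesis unfolding cyclic_hom_def derived_def
    using B.generate_subgroup_incl group_hom.subgroup_kernel[OF gh] by blast
qed

end

context bsetup begin

lemma braid_eq': "1 \<le> i \<Longrightarrow> i + 1 < n \<Longrightarrow> x i \<otimes>\<^bsub>G\<^esub> x (i+1) = x (i+1) \<otimes>\<^bsub>G\<^esub> x i \<Longrightarrow> x i = x (i+1)"
proof -
  assume i: "1 \<le> i" "i + 1 < n" and c: "x i \<otimes>\<^bsub>G\<^esub> x (i+1) = x (i+1) \<otimes>\<^bsub>G\<^esub> x i"
  have "x i \<in> carrier G" "x (i+1) \<in> carrier G" using x_carrier i by auto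
  from group_braid_eq[OF G this c x_braid[OF i]] show ?thesis .
qed

lemma neighbor_up:
  assumes i: "1 \<le> i" "i + 1 < n" and e: "x i = x (i+1)"
  shows "m \<ge> i \<Longrightarrow> m + 1 < n \<Longrightarrow> x m = x i \<and> x (m+1) = x i"
proof (induction m rule: dec_induct)
  case base then show ?case using e by simp
next
  case (step m)
  then have IH: "x m = x i" "x (m+1) = x i" by auto
  have c: "x (m+1) \<otimes>\<^bsub>G\<^esub> x (m+2) = x (m+2) \<otimes>\<^bsub>G\<^esub> x (m+1)"
    using x_comm[of m "m+2"] IH step i by simp
  have "x (m+1) = x (m+1+1)"
    using braid_eq'[of "m+1"] c step i by (simp add: numeral_2_eq_2)
  then show ?case using IH by simp
qed

lemma neighbor_down:
  assumes i: "1 \<le> i" "i + 1 < n" and e: "x i = x (i+1)"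
  shows "d < i \<Longrightarrow> x (i - d) = x i \<and> x (i - d + 1) = x i"
proof (induction d)
  case 0 then show ?case using e by simp
next
  case (Suc d)
  then have IH: "x (i - d) = x i" "x (i - d + 1) = x i" by auto
  have c: "x (i - Suc d) \<otimes>\<^bsub>G\<^esub> x (i - d + 1) = x (i - d + 1) \<otimes>\<^bsub>G\<^esub> x (i - Suc d)"
    using x_comm[of "i - Suc d" "i - d + 1"] Suc.prems i by simp
  have eq: "i - Suc d + 1 = i - d" using Suc.prems by simp
  have "x (i - Suc d) = x (i - Suc d + 1)"
    using braid_eq'[of "i - Suc d"] c Suc.prems i IH eq by simp
  then show ?case using IH eq by simp
qed

lemma neighbor_all:
  assumes i: "1 \<le> i" "i + 1 < n" and e: "x i = x (i+1)"
  shows "cyclic_hom B G f"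
proof (rule all_equal_cyclic[of "x i"])
  show "x i \<in> carrier G" using x_carrier i by simp
  fix j assume j: "1 \<le> j" "j < n"
  show "x j = x i"
  proof (cases "j \<ge> i")
    case True
    then show ?thesis using neighbor_up[OF i e, of "j - 1"] neighbor_up[OF i e, of j] j i
      by (cases "j + 1 < n") auto
  next
    case False
    then show ?thesis using neighbor_down[OF i e, of "i - j"] j by simp
  qed
qed

lemma not_cyclic_distinct:
  assumes n5: "n \<ge> 5" and nc: "\<not> cyclic_hom B G f"
    and ab: "1 \<le> a" "a < b" "b < n"
  shows "x a \<noteq> x b"
proof
  assume e: "x a = x b"
  have brd: "x p = x q" if "1 \<le> p" "p < n" "1 \<le> q" "q < n" "p + 1 = q \<or> q + 1 = p"
     "x p \<otimes>\<^bsub>G\<^esub> x q = x q \<otimes>\<^bsub>G\<^esub> x p" for p q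
    using that braid_eq'[of p] braid_eq'[of q] by auto
  consider "b = a + 1" | "b \<ge> a + 3" | "b = a + 2" "a \<ge> 2" | "a = 1" "b = 3" using ab by linarith
  then show False
  proof cases
    case 1 then show False using neighbor_all[of a] ab e nc by simp
  next
    case 2
    have "x (a+1) \<otimes>\<^bsub>G\<^esub> x a = x a \<otimes>\<^bsub>G\<^esub> x (a+1)"
      using x_comm[of "a+1" b] 2 ab e by simp
    then have "x a = x (a+1)" using brd[of a "a+1"] 2 ab by auto
    then show False using neighbor_all[of a] ab 2 nc by simp
  next
    case 3
    have "x (a-1) \<otimes>\<^bsub>G\<^esub> x a = x a \<otimes>\<^bsub>G\<^esub> x (a-1)"
      using x_comm[of "a-1" b] 3 ab e by simp
    then have "x (a-1) = x (a-1+1)" using brd[of "a-1" a] 3 ab by auto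
    moreover have "1 \<le> a - 1" "a - 1 + 1 < n" using 3 ab by auto
    ultimately show False using neighbor_all[of "a-1"] nc by blast
  next
    case 4
    have "x 4 \<otimes>\<^bsub>G\<^esub> x 3 = x 3 \<otimes>\<^bsub>G\<^esub> x 4"
      using x_comm[of 1 4] 4 ab e n5 by simp
    then have "x 3 = x (3+1)" using brd[of 3 4] 4 n5 by auto
    then show False using neighbor_all[of 3] n5 nc by simp
  qed
qed

end

lemma (in group) comm_generate:
  assumes y: "y \<in> carrier G" and S: "S \<subseteq> carrier G" and c: "\<And>s. s \<in> S \<Longrightarrow> y \<otimes> s = s \<otimes> y"
  shows "h \<in> generate G S \<Longrightarrow> y \<otimes> h = h \<otimes> y"
proof (induction rule: generate.induct)
  case one then show ?case using y by simp
next
  case (incl h) then show ?case using c by simp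
next
  case (inv h)
  then have h: "h \<in> carrier G" using S by auto
  have "inv h \<otimes> y = inv h \<otimes> (y \<otimes> h) \<otimes> inv h" using h y by (simp add: m_assoc)
  also have "\<dots> = inv h \<otimes> (h \<otimes> y) \<otimes> inv h" using c[OF inv] by simp
  also have "\<dots> = y \<otimes> inv h" using h y by (simp add: m_assoc[symmetric])
  finally show ?case by simp
next
  case (eng h1 h2)
  have "h1 \<in> carrier G" "h2 \<in> carrier G" using eng.hyps generate_in_carrier[OF S] by auto
  then show ?case using eng.IH y by (metis m_assoc)
qed

locale tsetup =
  fixes G :: "('g, 'c) monoid_scheme" (structure) and k :: nat and t :: "nat \<Rightarrow> 'g"
  assumes grp: "group G" and fin: "finite (carrier G)" and k2: "k \<ge> 2"
    and tc: "\<And>i. i \<in> {1..k} \<Longrightarrow> t i \<in> carrier G"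
    and tinj: "inj_on t {1..k}"
    and tcomm: "\<And>i j. i \<in> {1..k} \<Longrightarrow> j \<in> {1..k} \<Longrightarrow> t i \<otimes>\<^bsub>G\<^esub> t j = t j \<otimes>\<^bsub>G\<^esub> t i"
    and tswap: "\<And>i. 1 \<le> i \<Longrightarrow> i < k \<Longrightarrow> \<exists>g\<in>carrier G. \<forall>j\<in>{1..k}. g \<otimes>\<^bsub>G\<^esub> t j = t (transpose i (i+1) j) \<otimes>\<^bsub>G\<^esub> g"
begin

interpretation group G by (rule grp)

definition "realized p \<longleftrightarrow> (\<forall>j\<in>{1..k}. p j \<in> {1..k}) \<and> (\<exists>g\<in>carrier G. \<forall>j\<in>{1..k}. g \<otimes> t j = t (p j) \<otimes> g)"

lemma realized_id: "realized id"
  unfolding realized_def using tc by (intro conjI bexI[of _ \<one>]) auto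

lemma realized_comp:
  assumes "realized p" "realized q"
  shows "realized (p \<circ> q)"
proof -
  obtain g where g: "g \<in> carrier G" "\<forall>j\<in>{1..k}. g \<otimes> t j = t (p j) \<otimes> g" using assms(1) realized_def by auto
  obtain h where h: "h \<in> carrier G" "\<forall>j\<in>{1..k}. h \<otimes> t j = t (q j) \<otimes> h" using assms(2) realized_def by auto
  have pin: "\<And>j. j \<in> {1..k} \<Longrightarrow> p j \<in> {1..k}" and qin: "\<And>j. j \<in> {1..k} \<Longrightarrow> q j \<in> {1..k}"
    using assms unfolding realized_def by auto
  note assms = assms qin
  have "g \<otimes> h \<otimes> t j = t (p (q j)) \<otimes> (g \<otimes> h)" if j: "j \<in> {1..k}" for j
  proof -
    have "g \<otimes> h \<otimes> t j = g \<otimes> (h \<otimes> t j)" using g h tc j by (simp add: m_assoc)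
    also have "\<dots> = g \<otimes> (t (q j) \<otimes> h)" using h j by simp
    also have "\<dots> = (g \<otimes> t (q j)) \<otimes> h" by (rule m_assoc[symmetric]) (use h j g tc assms(3) in auto)
    also have "\<dots> = (t (p (q j)) \<otimes> g) \<otimes> h" using g j assms(3) by simp
    also have "\<dots> = t (p (q j)) \<otimes> (g \<otimes> h)" by (rule m_assoc) (use g j assms(3) tc h pin in auto)
    finally show ?thesis .
  qed
  then show ?thesis unfolding realized_def using g h pin qin by (intro conjI bexI[of _ "g \<otimes> h"]) auto
qed

lemma transpose_in: "a \<in> {1..k} \<Longrightarrow> b \<in> {1..k} \<Longrightarrow> j \<in> {1..k} \<Longrightarrow> transpose a b j \<in> {1..k}"
  by (simp add: transpose_def)

lemma realized_transpose_lt: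
  assumes a: "1 \<le> a"
  shows "Suc a \<le> b \<Longrightarrow> b \<le> k \<Longrightarrow> realized (transpose a b)"
proof (induction b)
  case 0 then show ?case by simp
next
  case (Suc b)
  show ?case
  proof (cases "b = a")
    case True
    then show ?thesis using tswap[of a] a Suc.prems unfolding realized_def by (auto simp: transpose_def)
  next
    case False
    then have ab: "Suc a \<le> b" using Suc.prems by simp
    have e: "transpose a (Suc b) = transpose b (Suc b) \<circ> transpose a b \<circ> transpose b (Suc b)"
      using ab by (auto simp: transpose_def fun_eq_iff)
    have r1: "realized (transpose b (Suc b))" using tswap[of b] ab a Suc.prems unfolding realized_def by (auto simp: transpose_def)
    have r2: "realized (transpose a b)" using Suc ab by simp
    have "realized (transpose b (Suc b) \<circ> transpose a b)"
      by (rule realized_comp[OF r1 r2])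
    then have "realized (transpose b (Suc b) \<circ> transpose a b \<circ> transpose b (Suc b))"
      by (rule realized_comp[OF _ r1])
    then show ?thesis by (simp only: e)
  qed
qed

lemma realized_transpose:
  assumes "a \<in> {1..k}" "b \<in> {1..k}"
  shows "realized (transpose a b)"
proof -
  consider "a = b" | "a < b" | "b < a" by linarith
  then show ?thesis
  proof cases
    case 1 then show ?thesis using realized_id by (simp add: id_def)
  next
    case 2 then show ?thesis using realized_transpose_lt[of a b] assms by simp
  next
    case 3 then show ?thesis using realized_transpose_lt[of b a] assms by (simp add: transpose_commute)
  qed
qed

lemma realized_perm: assumes "p permutes {1..k}" shows "realized p"
  using assms finite_atLeastAtMost
proof (induction rule: permutes_induct)
  case id then show ?case by (rule realized_id)
next
  case (swap a b p)
  have rp: "realized p" using swap by blast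
  have pp: "p permutes {1..k}" using swap by blast
  show ?case
    by (rule realized_comp[OF realized_transpose[OF swap(1,2)] rp])
qed

end

context tsetup begin

interpretation group G by (rule grp)

definition "H = generate G (t ` {1..k})"

lemma T_sub: "t ` {1..k} \<subseteq> carrier G" using tc by auto

lemma H_sub: "subgroup H G" unfolding H_def by (rule generate_is_subgroup[OF T_sub])

lemma H_carrier: "h \<in> H \<Longrightarrow> h \<in> carrier G" using H_sub subgroup.subset by blast

lemma t_H: "j \<in> {1..k} \<Longrightarrow> t j \<in> H" unfolding H_def by (auto intro: generate.incl)

lemma H_comm_t: "h \<in> H \<Longrightarrow> j \<in> {1..k} \<Longrightarrow> t j \<otimes> h = h \<otimes> t j"
  unfolding H_def by (rule comm_generate[OF tc T_sub]) (auto intro: tcomm)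

lemma H_comm: "h1 \<in> H \<Longrightarrow> h2 \<in> H \<Longrightarrow> h1 \<otimes> h2 = h2 \<otimes> h1"
proof -
  assume h: "h1 \<in> H" "h2 \<in> H"
  have h2: "h2 \<in> generate G (t ` {1..k})" using h(2) H_def by simp
  show ?thesis by (rule comm_generate[OF H_carrier[OF h(1)] T_sub _ h2]) (use H_comm_t h(1) in auto)
qed

definition "C = G\<lparr>carrier := H\<rparr>"

lemma C_comm: "comm_group C"
proof -
  have "group C" unfolding C_def by (rule subgroup.subgroup_is_group[OF H_sub grp])
  then show ?thesis by (rule group.group_comm_groupI) (auto simp: C_def H_comm)
qed

interpretation C: comm_group C by (rule C_comm)

definition "P S = finprod C t S"

lemma t_PiC: "S \<subseteq> {1..k} \<Longrightarrow> t \<in> S \<rightarrow> carrier C"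
  using t_H by (auto simp: C_def)

lemma P_H: "S \<subseteq> {1..k} \<Longrightarrow> P S \<in> H"
  using C.finprod_closed[OF t_PiC] by (simp add: P_def C_def)

lemma P_carrier: "S \<subseteq> {1..k} \<Longrightarrow> P S \<in> carrier G"
  using P_H H_carrier by blast

lemma P_insert: "S \<subseteq> {1..k} \<Longrightarrow> x \<in> {1..k} \<Longrightarrow> x \<notin> S \<Longrightarrow> P (insert x S) = t x \<otimes> P S"
proof -
  assume a: "S \<subseteq> {1..k}" "x \<in> {1..k}" "x \<notin> S"
  have "finite S" using a(1) finite_subset by blast
  then have "finprod C t (insert x S) = t x \<otimes>\<^bsub>C\<^esub> finprod C t S"
    using a t_PiC[OF a(1)] t_H by (intro C.finprod_insert) (auto simp: C_def)
  then show ?thesis by (simp add: P_def C_def)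
qed

lemma P_conj:
  assumes g: "g \<in> carrier G" "\<forall>j\<in>{1..k}. g \<otimes> t j = t (p j) \<otimes> g"
    and p: "inj_on p {1..k}" "\<forall>j\<in>{1..k}. p j \<in> {1..k}"
  shows "S \<subseteq> {1..k} \<Longrightarrow> g \<otimes> P S = P (p ` S) \<otimes> g"
proof -
  assume S: "S \<subseteq> {1..k}"
  have "finite S" using S finite_subset by blast
  then show ?thesis using S
  proof (induction S rule: finite_induct)
    case empty
    have "P {} = \<one>" unfolding P_def using C.finprod_empty by (simp add: C_def)
    then show ?case using g by simp
  next
    case (insert x S)
    have x: "x \<in> {1..k}" and S: "S \<subseteq> {1..k}" using insert by auto
    have pS: "p ` S \<subseteq> {1..k}" using S p by auto
    have px: "p x \<notin> p ` S" using p(1) x S insert.hyps(2) by (auto dest: inj_onD)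
    have "g \<otimes> P (insert x S) = g \<otimes> (t x \<otimes> P S)" using P_insert[OF S x insert.hyps(2)] by simp
    also have "\<dots> = (g \<otimes> t x) \<otimes> P S" using g tc[OF x] P_carrier[OF S] by (simp add: m_assoc)
    also have "\<dots> = (t (p x) \<otimes> g) \<otimes> P S" using g x by simp
    also have "\<dots> = t (p x) \<otimes> (g \<otimes> P S)" using g tc p x P_carrier[OF S] by (simp add: m_assoc)
    also have "\<dots> = t (p x) \<otimes> (P (p ` S) \<otimes> g)" using insert.IH S by simp
    also have "\<dots> = (t (p x) \<otimes> P (p ` S)) \<otimes> g" using g tc p x P_carrier[OF pS] by (simp add: m_assoc)
    also have "\<dots> = P (p ` insert x S) \<otimes> g" using P_insert[OF pS _ px] p x by simp
    finally show ?case .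
  qed
qed

end

context tsetup begin

interpretation group G by (rule grp)

lemma transpose_props: "a \<in> {1..k} \<Longrightarrow> b \<in> {1..k} \<Longrightarrow> inj_on (transpose a b) {1..k} \<and> (\<forall>j\<in>{1..k}. transpose a b j \<in> {1..k})"
  by (auto simp: transpose_def inj_on_def)

lemma P_inj_aux:
  assumes S: "S \<subseteq> {1..k-1}" and S': "S' \<subseteq> {1..k-1}" and i: "i \<in> S" "i \<notin> S'" and e: "P S = P S'"
  shows False
proof -
  have "i \<in> {1..k-1}" using S i by auto
  then have ik: "i \<in> {1..k}" "k \<in> {1..k}" "i \<noteq> k" using k2 by auto
  obtain g where g: "g \<in> carrier G" "\<forall>j\<in>{1..k}. g \<otimes> t j = t (transpose i k j) \<otimes> g"
    using realized_transpose[OF ik(1,2)] unfolding realized_def by blast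
  have tp: "inj_on (transpose i k) {1..k}" "\<forall>j\<in>{1..k}. transpose i k j \<in> {1..k}"
    using transpose_props[OF ik(1,2)] by auto
  have sub: "{1..k-1} \<subseteq> {1..k}" by auto
  have S1: "S \<subseteq> {1..k}" "S' \<subseteq> {1..k}" using S S' sub by blast+
  have "k \<notin> {1..k-1}" using k2 by simp
  then have kS: "k \<notin> S" "k \<notin> S'" using S S' by blast+
  have fix1: "transpose i k x = x" if "x \<in> S - {i}" for x using that kS by (auto simp: transpose_def)
  have fix2: "transpose i k x = x" if "x \<in> S'" for x using that kS i by (auto simp: transpose_def)
  have im0: "transpose i k ` (S - {i}) = S - {i}" using fix1 by simp
  have "transpose i k ` S = transpose i k ` (insert i (S - {i}))" using i by (simp add: insert_absorb)
  also have "\<dots> = insert k (S - {i})" by (simp only: image_insert im0 transpose_apply_first)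
  finally have im1: "transpose i k ` S = insert k (S - {i})" .
  have im2: "transpose i k ` S' = S'" using fix2 by simp
  have c1: "g \<otimes> P S = P (insert k (S - {i})) \<otimes> g" using P_conj[OF g tp S1(1)] im1 by simp
  have c2: "g \<otimes> P S' = P S' \<otimes> g" using P_conj[OF g tp S1(2)] im2 by simp
  have Sm: "S - {i} \<subseteq> {1..k}" using S1 by auto
  have "P (insert k (S - {i})) \<otimes> g = P S \<otimes> g" using c1 c2 e by simp
  then have "P (insert k (S - {i})) = P S"
    using P_carrier[OF Sm] P_carrier[OF S1(1)] P_carrier[of "insert k (S - {i})"] Sm ik g by simp
  moreover have "P (insert k (S - {i})) = t k \<otimes> P (S - {i})" using P_insert[OF Sm ik(2)] kS by simp
  moreover have "P S = t i \<otimes> P (S - {i})" using P_insert[OF Sm ik(1)] i by (simp add: insert_absorb)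
  ultimately have "t k = t i" using tc ik P_carrier[OF Sm] by simp
  then show False using tinj ik by (auto dest: inj_onD)
qed

lemma P_injective: "inj_on P (Pow {1..k-1})"
proof (rule inj_onI)
  fix S S' assume a: "S \<in> Pow {1..k-1}" "S' \<in> Pow {1..k-1}" "P S = P S'"
  show "S = S'"
  proof (rule ccontr)
    assume "S \<noteq> S'"
    then obtain i where "(i \<in> S \<and> i \<notin> S') \<or> (i \<in> S' \<and> i \<notin> S)" by blast
    then show False
    proof
      assume "i \<in> S \<and> i \<notin> S'" then show False using P_inj_aux[of S S' i] a by blast
    next
      assume "i \<in> S' \<and> i \<notin> S" then show False using P_inj_aux[of S' S i] a by simp
    qed
  qed
qed

definition "gp p = (SOME g. g \<in> carrier G \<and> (\<forall>j\<in>{1..k}. g \<otimes> t j = t (p j) \<otimes> g))"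

lemma gp: "p permutes {1..k} \<Longrightarrow> gp p \<in> carrier G \<and> (\<forall>j\<in>{1..k}. gp p \<otimes> t j = t (p j) \<otimes> gp p)"
proof -
  assume p: "p permutes {1..k}"
  have "\<exists>g. g \<in> carrier G \<and> (\<forall>j\<in>{1..k}. g \<otimes> t j = t (p j) \<otimes> g)"
    using realized_perm[OF p] unfolding realized_def by blast
  then show ?thesis unfolding gp_def by (rule someI_ex)
qed

theorem bound: "2 ^ (k - 1) * fact k \<le> order G"
proof -
  define Perms where "Perms = {p. p permutes {1..k}}"
  define A where "A = P ` Pow {1..k-1}"
  define Phi where "Phi = (\<lambda>(p, a). gp p \<otimes> a)"
  have sub0: "{1..k-1} \<subseteq> {1..k}" by auto
  have AH: "a \<in> H" if aA: "a \<in> A" for a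
  proof -
    obtain S where "S \<subseteq> {1..k-1}" "a = P S" using aA unfolding A_def by auto
    then show ?thesis using P_H[of S] sub0 by blast
  qed
  have inj: "inj_on Phi (Perms \<times> A)"
  proof (rule inj_onI)
    fix u v assume u: "u \<in> Perms \<times> A" and v: "v \<in> Perms \<times> A" and e: "Phi u = Phi v"
    obtain p a where pa: "u = (p, a)" by force
    obtain q b where qb: "v = (q, b)" by force
    have p: "p permutes {1..k}" and q: "q permutes {1..k}" and a: "a \<in> H" and b: "b \<in> H"
      using u v AH unfolding pa qb Perms_def by auto
    have ac: "a \<in> carrier G" "b \<in> carrier G" using a b H_carrier by auto
    have e': "gp p \<otimes> a = gp q \<otimes> b" using e pa qb by (simp add: Phi_def)
    have key: "gp r \<otimes> c \<otimes> t j = t (r j) \<otimes> (gp r \<otimes> c)" if "r permutes {1..k}" "c \<in> H" "j \<in> {1..k}" for r c j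
    proof -
      have gr: "gp r \<in> carrier G" "gp r \<otimes> t j = t (r j) \<otimes> gp r" using gp[OF that(1)] that(3) by auto
      have rj: "r j \<in> {1..k}" using permutes_in_image[OF that(1)] that(3) by simp
      have cc: "c \<in> carrier G" using that(2) H_carrier by auto
      have "gp r \<otimes> c \<otimes> t j = gp r \<otimes> (c \<otimes> t j)" by (rule m_assoc) (use gr cc tc that(3) in auto)
      also have "\<dots> = gp r \<otimes> (t j \<otimes> c)" using H_comm_t[OF that(2,3)] by simp
      also have "\<dots> = (gp r \<otimes> t j) \<otimes> c" by (rule m_assoc[symmetric]) (use gr cc tc that(3) in auto)
      also have "\<dots> = (t (r j) \<otimes> gp r) \<otimes> c" using gr(2) by simp
      also have "\<dots> = t (r j) \<otimes> (gp r \<otimes> c)" by (rule m_assoc) (use gr cc tc rj in auto)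
      finally show ?thesis .
    qed
    have "p j = q j" for j
    proof (cases "j \<in> {1..k}")
      case True
      have X: "gp p \<otimes> a \<in> carrier G" using gp[OF p] ac by simp
      have "t (p j) \<otimes> (gp p \<otimes> a) = gp p \<otimes> a \<otimes> t j" using key[OF p a True] by simp
      also have "\<dots> = gp q \<otimes> b \<otimes> t j" using e' by simp
      also have "\<dots> = t (q j) \<otimes> (gp q \<otimes> b)" using key[OF q b True] by simp
      also have "\<dots> = t (q j) \<otimes> (gp p \<otimes> a)" using e' by simp
      finally have "t (p j) \<otimes> (gp p \<otimes> a) = t (q j) \<otimes> (gp p \<otimes> a)" .
      moreover have "p j \<in> {1..k}" using permutes_in_image[OF p] True by simp
      moreover have "q j \<in> {1..k}" using permutes_in_image[OF q] True by simp
      ultimately have tt: "t (p j) = t (q j)" "p j \<in> {1..k}" "q j \<in> {1..k}" using X tc by auto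
      then show ?thesis using inj_onD[OF tinj tt(1)] by simp
    next
      case False
      then show ?thesis using p q by (simp add: permutes_not_in)
    qed
    then have "p = q" by (rule ext)
    then have "gp p \<otimes> a = gp p \<otimes> b" using e' by simp
    then have "a = b" using gp[OF p] ac by simp
    then show "u = v" using pa qb \<open>p = q\<close> by simp
  qed
  have sub: "Phi ` (Perms \<times> A) \<subseteq> carrier G"
  proof
    fix z assume "z \<in> Phi ` (Perms \<times> A)"
    then obtain p a where pa: "p \<in> Perms" "a \<in> A" "z = gp p \<otimes> a" by (auto simp: Phi_def)
    have "gp p \<in> carrier G" using gp pa(1) by (simp add: Perms_def)
    moreover have "a \<in> carrier G" using AH[OF pa(2)] H_carrier by blast
    ultimately show "z \<in> carrier G" using pa(3) by simp
  qed
  have "card (Perms \<times> A) \<le> card (carrier G)"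
    using card_inj_on_le[OF inj sub fin] .
  moreover have "card Perms = fact k" unfolding Perms_def by (rule card_permutations) auto
  moreover have "card A = 2 ^ (k - 1)"
    unfolding A_def using card_image[OF P_injective] card_Pow[of "{1..k-1}"] by simp
  ultimately show ?thesis by (simp add: order_def card_cartesian_product mult.commute)
qed

end

lemma (in group) comm_ctx: "x \<in> carrier G \<Longrightarrow> y \<in> carrier G \<Longrightarrow> Y \<in> carrier G \<Longrightarrow> x \<otimes> y = y \<otimes> x \<Longrightarrow> x \<otimes> (y \<otimes> Y) = y \<otimes> (x \<otimes> Y)"
  by (metis m_assoc)

lemma (in group) braid_ctx: "x \<in> carrier G \<Longrightarrow> y \<in> carrier G \<Longrightarrow> Y \<in> carrier G \<Longrightarrow> x \<otimes> y \<otimes> x = y \<otimes> x \<otimes> y \<Longrightarrow> x \<otimes> (y \<otimes> (x \<otimes> Y)) = y \<otimes> (x \<otimes> (y \<otimes> Y))"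
  by (metis m_assoc m_closed)

lemma (in group) comm_prod: "d \<in> carrier G \<Longrightarrow> x \<in> carrier G \<Longrightarrow> y \<in> carrier G \<Longrightarrow> d \<otimes> x = x \<otimes> d \<Longrightarrow> d \<otimes> y = y \<otimes> d \<Longrightarrow> d \<otimes> (x \<otimes> y) = (x \<otimes> y) \<otimes> d"
  by (metis m_assoc)

lemma (in group) swap_rel:
  assumes c: "a \<in> carrier G" "b \<in> carrier G" "c \<in> carrier G"
    and ac: "a \<otimes> c = c \<otimes> a" and ab: "a \<otimes> b \<otimes> a = b \<otimes> a \<otimes> b" and bc: "b \<otimes> c \<otimes> b = c \<otimes> b \<otimes> c"
  shows "(b \<otimes> a \<otimes> c \<otimes> b) \<otimes> a = c \<otimes> (b \<otimes> a \<otimes> c \<otimes> b)"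
    and "(b \<otimes> a \<otimes> c \<otimes> b) \<otimes> c = a \<otimes> (b \<otimes> a \<otimes> c \<otimes> b)"
proof -
  have "(b \<otimes> a \<otimes> c \<otimes> b) \<otimes> a = b \<otimes> (a \<otimes> (c \<otimes> (b \<otimes> a)))" using c by (simp add: m_assoc)
  also have "\<dots> = b \<otimes> (c \<otimes> (a \<otimes> (b \<otimes> a)))" using comm_ctx[of a c "b \<otimes> a"] c ac by simp
  also have "\<dots> = b \<otimes> (c \<otimes> (b \<otimes> (a \<otimes> b)))" using braid_ctx[of a b \<one>] c ab by simp
  also have "\<dots> = c \<otimes> (b \<otimes> (c \<otimes> (a \<otimes> b)))" using braid_ctx[of b c "a \<otimes> b"] c bc by simp
  also have "\<dots> = c \<otimes> (b \<otimes> (a \<otimes> (c \<otimes> b)))" using comm_ctx[of a c b] c ac by simp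
  also have "\<dots> = c \<otimes> (b \<otimes> a \<otimes> c \<otimes> b)" using c by (simp add: m_assoc)
  finally show "(b \<otimes> a \<otimes> c \<otimes> b) \<otimes> a = c \<otimes> (b \<otimes> a \<otimes> c \<otimes> b)" .
  have "(b \<otimes> a \<otimes> c \<otimes> b) \<otimes> c = b \<otimes> (a \<otimes> (c \<otimes> (b \<otimes> c)))" using c by (simp add: m_assoc)
  also have "\<dots> = b \<otimes> (a \<otimes> (b \<otimes> (c \<otimes> b)))" using braid_ctx[of b c \<one>] c bc by simp
  also have "\<dots> = a \<otimes> (b \<otimes> (a \<otimes> (c \<otimes> b)))" using braid_ctx[of b a "c \<otimes> b"] c ab by simp
  also have "\<dots> = a \<otimes> (b \<otimes> (c \<otimes> (a \<otimes> b)))" using comm_ctx[of a c b] c ac by simp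
  also have "\<dots> = a \<otimes> (b \<otimes> a \<otimes> c \<otimes> b)" using comm_ctx[of a c b] c ac by (simp add: m_assoc)
  finally show "(b \<otimes> a \<otimes> c \<otimes> b) \<otimes> c = a \<otimes> (b \<otimes> a \<otimes> c \<otimes> b)" .
qed

theorem theorem1p1:
  fixes n :: nat and G :: "('g, 'c) monoid_scheme" and f :: "braid_word set \<Rightarrow> 'g"
  assumes "n \<ge> 5"
    and "group G"
    and "finite (carrier G)"
    and "f \<in> hom (braid_group n) G"
    and "\<not> cyclic_hom (braid_group n) G f"
  shows "order G \<ge> 2 ^ (n div 2 - 1) * fact (n div 2)"
proof -
  note n5 = assms(1)
  interpret bsetup n G f by (rule bsetup.intro[OF assms(2,4)])
  interpret group G by (rule assms(2))
  define k where "k = n div 2"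
  define t where "t i = x (2 * i - 1)" for i
  have k2: "k \<ge> 2" using n5 by (simp add: k_def)
  have kn: "2 * k \<le> n" by (simp add: k_def)
  have idx: "1 \<le> 2 * i - 1 \<and> 2 * i - 1 < n" if "i \<in> {1..k}" for i
    using that kn by auto
  have tc: "t i \<in> carrier G" if "i \<in> {1..k}" for i
    using idx[OF that] x_carrier[of "2 * i - 1"] by (simp add: t_def)
  have tinj: "inj_on t {1..k}"
  proof (rule inj_onI)
    fix i j assume ij: "i \<in> {1..k}" "j \<in> {1..k}" "t i = t j"
    show "i = j"
    proof (rule ccontr)
      assume "i \<noteq> j"
      then consider "i < j" | "j < i" by linarith
      then show False
      proof cases
        case 1
        have "1 \<le> 2 * i - 1" "2 * i - 1 < 2 * j - 1" "2 * j - 1 < n" using 1 ij kn by auto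
        then show False using not_cyclic_distinct[OF n5 assms(5), of "2 * i - 1" "2 * j - 1"] ij(3)
          by (simp add: t_def)
      next
        case 2
        have "1 \<le> 2 * j - 1" "2 * j - 1 < 2 * i - 1" "2 * i - 1 < n" using 2 ij kn by auto
        then show False using not_cyclic_distinct[OF n5 assms(5), of "2 * j - 1" "2 * i - 1"] ij(3)
          by (simp add: t_def)
      qed
    qed
  qed
  have xcomm: "x p \<otimes>\<^bsub>G\<^esub> x q = x q \<otimes>\<^bsub>G\<^esub> x p" if "1 \<le> p" "p < n" "1 \<le> q" "q < n" "p + 2 \<le> q \<or> q + 2 \<le> p" for p q
    using that x_comm[of p q] x_comm[of q p] by auto
  have tcomm: "t i \<otimes>\<^bsub>G\<^esub> t j = t j \<otimes>\<^bsub>G\<^esub> t i" if "i \<in> {1..k}" "j \<in> {1..k}" for i j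
  proof (cases "i = j")
    case True then show ?thesis by simp
  next
    case False
    have "1 \<le> 2 * i - 1" "2 * i - 1 < n" "1 \<le> 2 * j - 1" "2 * j - 1 < n"
      "2 * i - 1 + 2 \<le> 2 * j - 1 \<or> 2 * j - 1 + 2 \<le> 2 * i - 1" using False that kn by auto
    then show ?thesis using xcomm[of "2 * i - 1" "2 * j - 1"] by (simp add: t_def)
  qed
  have tswap: "\<exists>g\<in>carrier G. \<forall>j\<in>{1..k}. g \<otimes>\<^bsub>G\<^esub> t j = t (transpose i (i+1) j) \<otimes>\<^bsub>G\<^esub> g"
    if i: "1 \<le> i" "i < k" for i
  proof -
    define a where "a = x (2 * i - 1)"
    define b where "b = x (2 * i)"
    define c where "c = x (2 * i + 1)"
    have ar: "1 \<le> 2 * i - 1" "2 * i + 1 < n" "2 * i - 1 + 1 = 2 * i" "2 * i - 1 + 2 \<le> 2 * i + 1" using i kn by auto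
    have abc: "a \<in> carrier G" "b \<in> carrier G" "c \<in> carrier G"
      using ar x_carrier[of "2 * i - 1"] x_carrier[of "2 * i"] x_carrier[of "2 * i + 1"] by (auto simp: a_def b_def c_def)
    have ac: "a \<otimes>\<^bsub>G\<^esub> c = c \<otimes>\<^bsub>G\<^esub> a" using xcomm[of "2 * i - 1" "2 * i + 1"] ar by (simp add: a_def c_def)
    have ab: "a \<otimes>\<^bsub>G\<^esub> b \<otimes>\<^bsub>G\<^esub> a = b \<otimes>\<^bsub>G\<^esub> a \<otimes>\<^bsub>G\<^esub> b" using x_braid[of "2 * i - 1"] ar by (simp add: a_def b_def)
    have bc: "b \<otimes>\<^bsub>G\<^esub> c \<otimes>\<^bsub>G\<^esub> b = c \<otimes>\<^bsub>G\<^esub> b \<otimes>\<^bsub>G\<^esub> c" using x_braid[of "2 * i"] ar by (simp add: b_def c_def)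
    define g where "g = b \<otimes>\<^bsub>G\<^esub> a \<otimes>\<^bsub>G\<^esub> c \<otimes>\<^bsub>G\<^esub> b"
    have gc: "g \<in> carrier G" using abc by (simp add: g_def)
    have ta: "t i = a" by (simp add: t_def a_def)
    have tc': "t (i+1) = c" by (simp add: t_def c_def)
    have "g \<otimes>\<^bsub>G\<^esub> t j = t (transpose i (i+1) j) \<otimes>\<^bsub>G\<^esub> g" if j: "j \<in> {1..k}" for j
    proof -
      consider "j = i" | "j = i + 1" | "j \<noteq> i" "j \<noteq> i + 1" by blast
      then show ?thesis
      proof cases
        case 1 then show ?thesis using swap_rel(1)[OF abc ac ab bc] ta tc' by (simp add: g_def)
      next
        case 2 then show ?thesis using swap_rel(2)[OF abc ac ab bc] ta tc' by (simp add: g_def)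
      next
        case 3
        have d: "t j \<in> carrier G" using tc j by simp
        have jr: "1 \<le> 2 * j - 1" "2 * j - 1 < n" "2 * i < n"
          "2 * j - 1 + 2 \<le> 2 * i - 1 \<or> 2 * i - 1 + 2 \<le> 2 * j - 1"
          "2 * j - 1 + 2 \<le> 2 * i \<or> 2 * i + 2 \<le> 2 * j - 1"
          "2 * j - 1 + 2 \<le> 2 * i + 1 \<or> 2 * i + 1 + 2 \<le> 2 * j - 1" using 3 j i kn by auto
        have da: "t j \<otimes>\<^bsub>G\<^esub> a = a \<otimes>\<^bsub>G\<^esub> t j" using xcomm[of "2 * j - 1" "2 * i - 1"] jr ar by (simp add: a_def t_def)
        have db: "t j \<otimes>\<^bsub>G\<^esub> b = b \<otimes>\<^bsub>G\<^esub> t j" using xcomm[of "2 * j - 1" "2 * i"] jr ar by (simp add: b_def t_def)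
        have dc: "t j \<otimes>\<^bsub>G\<^esub> c = c \<otimes>\<^bsub>G\<^esub> t j" using xcomm[of "2 * j - 1" "2 * i + 1"] jr ar by (simp add: c_def t_def)
        have "t j \<otimes>\<^bsub>G\<^esub> g = g \<otimes>\<^bsub>G\<^esub> t j"
          unfolding g_def
          by (intro comm_prod d abc m_closed da db dc)
        moreover have "transpose i (i+1) j = j" using 3 by (simp add: transpose_def)
        ultimately show ?thesis by simp
      qed
    qed
    then show ?thesis using gc by blast
  qed
  interpret tsetup G k t
    by (rule tsetup.intro[OF assms(2,3) k2 tc tinj tcomm tswap])
  show ?thesis using bound by (simp add: k_def)
qed

end
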